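(* Let $\nu$ be a modulus of variation, $1\le p<\infty$, and $\varepsilon_p(k)=(\nu(k)^p-\nu(k-1)^p)^{1/p}$ for $k\ge1$. Then: (i) $\{\nu(k)/k^{1/p}\}$ is nonincreasing if and only if $\{\nu(k)^p\}$ is quasiconcave, if and only if $\varepsilon_p(k)\le\nu(k)/k^{1/p}$ for all $k$; (ii) $\{\varepsilon_p(k)\}$ is nonincreasing if and only if $\{\nu(k)^p\}$ is concave; in this case, if $\nu(k)/k^{1/p}\to0$ then $\{\nu(k)/k^{1/p}\}$ is strictly decreasing from some index on; (iii) there is a constant $C$ such that $\nu(k)-\nu(k-1)\le C\,\varepsilon_p(k)\,k^{1/p-1}$ for all $k\ge1$.
   Context: A modulus of variation is a nondecreasing concave sequence of positive numbers $\nu(1),\nu(2),\dots$ (concave meaning $a_{k+1}+a_{k-1}\le2a_k$ for all $k$), with the convention $\nu(0)=0$. A sequence $\{a_k\}$ of positive numbers is quasiconcave if $\{a_k\}$ is nondecreasing and $\{a_k/k\}$ is nonincreasing. *)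

theory Defs
  imports Complex_Main
begin

text \<open>Sequences are functions nat => real; index 0 carries the convention value
  (nu 0 = 0), the "genuine" sequence starts at index 1.\<close>

definition concave_seq :: "(nat \<Rightarrow> real) \<Rightarrow> bool" where
  "concave_seq a \<longleftrightarrow> (\<forall>k\<ge>1. a (Suc k) + a (k - 1) \<le> 2 * a k)"

definition modulus_of_variation :: "(nat \<Rightarrow> real) \<Rightarrow> bool" where
  "modulus_of_variation \<nu> \<longleftrightarrow>
     \<nu> 0 = 0 \<and> (\<forall>k\<ge>1. \<nu> k > 0) \<and> (\<forall>k\<ge>1. \<nu> k \<le> \<nu> (Suc k)) \<and> concave_seq \<nu>"

definition quasiconcave :: "(nat \<Rightarrow> real) \<Rightarrow> bool" where
  "quasiconcave a \<longleftrightarrow> (\<forall>k\<ge>1. a k > 0) \<and> (\<forall>k\<ge>1. a k \<le> a (Suc k))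
     \<and> (\<forall>k\<ge>1. a (Suc k) / real (Suc k) \<le> a k / real k)"

definition eps_p :: "(nat \<Rightarrow> real) \<Rightarrow> real \<Rightarrow> nat \<Rightarrow> real" where
  "eps_p \<nu> p k = (\<nu> k powr p - \<nu> (k - 1) powr p) powr (1 / p)"

definition nonincr_seq :: "(nat \<Rightarrow> real) \<Rightarrow> bool" where
  "nonincr_seq a \<longleftrightarrow> (\<forall>k\<ge>1. a (Suc k) \<le> a k)"

end

theory Submission
  imports Defs
begin

lemma powr_le_iff_h:
  fixes x y p :: real
  assumes "0 \<le> x" "0 \<le> y" "0 < p"
  shows "x \<le> y \<longleftrightarrow> x powr p \<le> y powr p"
proof
  assume "x \<le> y" then show "x powr p \<le> y powr p" using assms by (intro powr_mono2) auto
next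
  assume h: "x powr p \<le> y powr p"
  show "x \<le> y"
  proof (rule ccontr)
    assume "\<not> x \<le> y"
    then have "y powr p < x powr p" using assms by (intro powr_less_mono2) auto
    then show False using h by simp
  qed
qed

lemma powr_pow_inv:
  fixes x p :: real
  assumes "0 \<le> x" "0 < p"
  shows "(x powr (1/p)) powr p = x"
  using assms by (simp add: powr_powr)

lemma nu_facts:
  assumes "modulus_of_variation \<nu>"
  shows "\<nu> 0 = 0" "\<And>k. k \<ge> 1 \<Longrightarrow> \<nu> k > 0" "\<And>k. \<nu> k \<ge> 0"
    "\<And>j k. j \<le> k \<Longrightarrow> \<nu> j \<le> \<nu> k"
    "\<And>k. k \<ge> 1 \<Longrightarrow> \<nu> (Suc k) + \<nu> (k - 1) \<le> 2 * \<nu> k"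
proof -
  show z: "\<nu> 0 = 0" using assms by (simp add: modulus_of_variation_def)
  show p: "\<And>k. k \<ge> 1 \<Longrightarrow> \<nu> k > 0" using assms by (simp add: modulus_of_variation_def)
  show nn: "\<And>k. \<nu> k \<ge> 0"
  proof -
    fix k :: nat show "\<nu> k \<ge> 0"
    proof (cases "k = 0")
      case True then show ?thesis using z by simp
    next
      case False then show ?thesis using p[of k] by simp
    qed
  qed
  have s: "\<And>k. \<nu> k \<le> \<nu> (Suc k)"
  proof -
    fix k show "\<nu> k \<le> \<nu> (Suc k)"
      using assms nn[of "Suc k"] z by (cases "k = 0") (auto simp: modulus_of_variation_def)
  qed
  show "\<And>j k. j \<le> k \<Longrightarrow> \<nu> j \<le> \<nu> k"
    using lift_Suc_mono_le[of \<nu>, OF s] by blast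
  show "\<And>k. k \<ge> 1 \<Longrightarrow> \<nu> (Suc k) + \<nu> (k - 1) \<le> 2 * \<nu> k"
    using assms by (simp add: modulus_of_variation_def concave_seq_def)
qed

lemma nu_lin:
  assumes "modulus_of_variation \<nu>" "k \<ge> 1"
  shows "real k * (\<nu> k - \<nu> (k - 1)) \<le> \<nu> k"
  using assms(2)
proof (induction k rule: dec_induct)
  case base
  then show ?case using nu_facts(1)[OF assms(1)] by simp
next
  case (step k)
  have c: "\<nu> (Suc k) - \<nu> k \<le> \<nu> k - \<nu> (k - 1)"
    using nu_facts(5)[OF assms(1) step(1)] by simp
  have "real k * (\<nu> (Suc k) - \<nu> k) \<le> real k * (\<nu> k - \<nu> (k - 1))"
    by (rule mult_left_mono[OF c]) simp
  then show ?case using step(3) by (simp add: algebra_simps)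
qed

theorem lemma2p1:
  fixes \<nu> :: "nat \<Rightarrow> real" and p :: real
  assumes "modulus_of_variation \<nu>" and "1 \<le> p"
  shows "(nonincr_seq (\<lambda>k. \<nu> k / real k powr (1 / p))
            \<longleftrightarrow> quasiconcave (\<lambda>k. \<nu> k powr p))
       \<and> (quasiconcave (\<lambda>k. \<nu> k powr p)
            \<longleftrightarrow> (\<forall>k\<ge>1. eps_p \<nu> p k \<le> \<nu> k / real k powr (1 / p)))
       \<and> (nonincr_seq (eps_p \<nu> p) \<longleftrightarrow> concave_seq (\<lambda>k. \<nu> k powr p))
       \<and> (nonincr_seq (eps_p \<nu> p) \<longrightarrow>
            (\<lambda>k. \<nu> k / real k powr (1 / p)) \<longlonglongrightarrow> 0 \<longrightarrow>
            (\<exists>N\<ge>1. \<forall>k\<ge>N. \<nu> (Suc k) / real (Suc k) powr (1 / p) < \<nu> k / real k powr (1 / p)))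
       \<and> (\<exists>C. \<forall>k\<ge>1. \<nu> k - \<nu> (k - 1) \<le> C * eps_p \<nu> p k * real k powr (1 / p - 1))"
proof -
  have p0: "p > 0" using assms(2) by simp
  note nf = nu_facts[OF assms(1)]
  define a where "a k = \<nu> k powr p" for k
  define f where "f k = \<nu> k / real k powr (1 / p)" for k
  have a0: "a 0 = 0" using nf(1) by (simp add: a_def)
  have apos: "a k > 0" if "k \<ge> 1" for k using nf(2)[OF that] by (simp add: a_def)
  have ann: "\<And>k. a k \<ge> 0" by (simp add: a_def)
  have amono: "a j \<le> a k" if "j \<le> k" for j k
    unfolding a_def using nf(4)[OF that] nf(3)[of j] p0 by (intro powr_mono2) auto
  have fnn: "\<And>k. f k \<ge> 0" unfolding f_def using nf(3) by simp
  have fp: "\<And>k. k \<ge> 1 \<Longrightarrow> f k powr p = a k / real k"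
    unfolding f_def a_def using nf(3) p0 by (simp add: powr_divide powr_powr)
  have fle: "\<And>j k. j \<ge> 1 \<Longrightarrow> k \<ge> 1 \<Longrightarrow> f j \<le> f k \<longleftrightarrow> real k * a j \<le> real j * a k"
  proof -
    fix j k :: nat assume j: "j \<ge> 1" and k: "k \<ge> 1"
    have "f j \<le> f k \<longleftrightarrow> f j powr p \<le> f k powr p"
      using powr_le_iff_h[OF fnn fnn p0] by blast
    also have "\<dots> \<longleftrightarrow> a j / real j \<le> a k / real k" using fp j k by simp
    also have "\<dots> \<longleftrightarrow> real k * a j \<le> real j * a k"
      using j k by (simp add: field_simps)
    finally show "f j \<le> f k \<longleftrightarrow> real k * a j \<le> real j * a k" .
  qed
  have eps: "\<And>k. eps_p \<nu> p k = (a k - a (k - 1)) powr (1/p)"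
    by (simp add: eps_p_def a_def)
  have epsnn: "\<And>k. eps_p \<nu> p k \<ge> 0" by (simp add: eps)
  have epsp: "\<And>k. eps_p \<nu> p k powr p = a k - a (k - 1)"
    using eps amono p0 by (simp add: powr_pow_inv)
  have epsle: "\<And>j k. eps_p \<nu> p j \<le> eps_p \<nu> p k \<longleftrightarrow> a j - a (j - 1) \<le> a k - a (k - 1)"
    using powr_le_iff_h[OF epsnn epsnn p0] unfolding epsp by blast
  have qc: "quasiconcave (\<lambda>k. \<nu> k powr p) \<longleftrightarrow> (\<forall>k\<ge>1. real k * a (Suc k) \<le> real (Suc k) * a k)"
  proof -
    have "quasiconcave (\<lambda>k. \<nu> k powr p) \<longleftrightarrow> (\<forall>k\<ge>1. a (Suc k) / real (Suc k) \<le> a k / real k)"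
      unfolding quasiconcave_def a_def[symmetric] using apos amono by auto
    also have "\<dots> \<longleftrightarrow> (\<forall>k\<ge>1. real k * a (Suc k) \<le> real (Suc k) * a k)"
      by (intro all_cong imp_cong refl) (simp add: field_simps)
    finally show ?thesis .
  qed
  have P1: "nonincr_seq (\<lambda>k. \<nu> k / real k powr (1 / p)) \<longleftrightarrow> quasiconcave (\<lambda>k. \<nu> k powr p)"
    unfolding qc f_def[symmetric] nonincr_seq_def using fle by simp
  have P2: "quasiconcave (\<lambda>k. \<nu> k powr p) \<longleftrightarrow> (\<forall>k\<ge>1. eps_p \<nu> p k \<le> \<nu> k / real k powr (1 / p))"
  proof -
    have e: "eps_p \<nu> p k \<le> f k \<longleftrightarrow> real k * (a k - a (k - 1)) \<le> a k" if "k \<ge> 1" for k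
    proof -
      have "eps_p \<nu> p k \<le> f k \<longleftrightarrow> eps_p \<nu> p k powr p \<le> f k powr p"
        using powr_le_iff_h[OF epsnn fnn p0] by blast
      also have "\<dots> \<longleftrightarrow> a k - a (k - 1) \<le> a k / real k" using epsp fp that by simp
      also have "\<dots> \<longleftrightarrow> real k * (a k - a (k - 1)) \<le> a k" using that by (simp add: field_simps)
      finally show ?thesis .
    qed
    have "(\<forall>k\<ge>1. eps_p \<nu> p k \<le> f k) \<longleftrightarrow> (\<forall>k\<ge>1. real k * (a k - a (k - 1)) \<le> a k)"
      using e by auto
    also have "\<dots> \<longleftrightarrow> (\<forall>k\<ge>1. real k * a (Suc k) \<le> real (Suc k) * a k)"
    proof
      assume h: "\<forall>k\<ge>1. real k * (a k - a (k - 1)) \<le> a k"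
      show "\<forall>k\<ge>1. real k * a (Suc k) \<le> real (Suc k) * a k"
      proof (intro allI impI)
        fix k :: nat assume "k \<ge> 1"
        have "real (Suc k) * (a (Suc k) - a k) \<le> a (Suc k)" using h by auto
        then show "real k * a (Suc k) \<le> real (Suc k) * a k" by (simp add: algebra_simps)
      qed
    next
      assume h: "\<forall>k\<ge>1. real k * a (Suc k) \<le> real (Suc k) * a k"
      show "\<forall>k\<ge>1. real k * (a k - a (k - 1)) \<le> a k"
      proof (intro allI impI)
        fix k :: nat assume k: "k \<ge> 1"
        show "real k * (a k - a (k - 1)) \<le> a k"
        proof (cases "k = 1")
          case True then show ?thesis using a0 by simp
        next
          case False
          then obtain m where m: "k = Suc m" "m \<ge> 1" using k by (cases k) auto
          have "real m * a (Suc m) \<le> real (Suc m) * a m" using h m by auto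
          then show ?thesis using m by (simp add: algebra_simps)
        qed
      qed
    qed
    finally show ?thesis unfolding qc f_def by simp
  qed
  have P3: "nonincr_seq (eps_p \<nu> p) \<longleftrightarrow> concave_seq (\<lambda>k. \<nu> k powr p)"
  proof -
    have "nonincr_seq (eps_p \<nu> p) \<longleftrightarrow> (\<forall>k\<ge>1. a (Suc k) - a k \<le> a k - a (k - 1))"
      unfolding nonincr_seq_def by (simp add: epsle)
    also have "\<dots> \<longleftrightarrow> (\<forall>k\<ge>1. a (Suc k) + a (k - 1) \<le> 2 * a k)"
      by (intro all_cong imp_cong refl) linarith
    finally show ?thesis unfolding concave_seq_def a_def .
  qed
  have P4: "nonincr_seq (eps_p \<nu> p) \<longrightarrow>
            (\<lambda>k. \<nu> k / real k powr (1 / p)) \<longlonglongrightarrow> 0 \<longrightarrow>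
            (\<exists>N\<ge>1. \<forall>k\<ge>N. \<nu> (Suc k) / real (Suc k) powr (1 / p) < \<nu> k / real k powr (1 / p))"
  proof (intro impI)
    assume ni: "nonincr_seq (eps_p \<nu> p)" and lim: "(\<lambda>k. \<nu> k / real k powr (1 / p)) \<longlonglongrightarrow> 0"
    have cc: "\<And>k. k \<ge> 1 \<Longrightarrow> a (Suc k) + a (k - 1) \<le> 2 * a k"
      using ni P3 unfolding concave_seq_def a_def by blast
    have bk: "real (Suc k) * a k \<le> real k * a (Suc k) \<Longrightarrow> real k * a (k - 1) \<le> real (k - 1) * a k"
      if "k \<ge> 2" for k
    proof -
      assume h: "real (Suc k) * a k \<le> real k * a (Suc k)"
      have "real k * a (Suc k) \<le> real k * (2 * a k - a (k - 1))"
        using cc[of k] that by (intro mult_left_mono) auto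
      then show ?thesis using h that by (simp add: algebra_simps of_nat_diff)
    qed
    have chain: "\<forall>j. 1 \<le> j \<and> j \<le> Suc k \<longrightarrow> f 1 \<le> f j"
      if "k \<ge> 1" "f k \<le> f (Suc k)" for k
      using that
    proof (induction k rule: dec_induct)
      case base
      show ?case
      proof (intro allI impI)
        fix j :: nat assume "1 \<le> j \<and> j \<le> Suc 1"
        then have "j = 1 \<or> j = Suc 1" by auto
        then show "f 1 \<le> f j" using base by auto
      qed
    next
      case (step k)
      have "real (Suc (Suc k)) * a (Suc k) \<le> real (Suc k) * a (Suc (Suc k))"
        using step(4) fle[of "Suc k" "Suc (Suc k)"] by simp
      then have "real (Suc k) * a k \<le> real k * a (Suc k)"
        using bk[of "Suc k"] step(1) by simp
      then have "f k \<le> f (Suc k)" using fle[of k "Suc k"] step(1) by simp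
      then have ih: "\<forall>j. 1 \<le> j \<and> j \<le> Suc k \<longrightarrow> f 1 \<le> f j" using step(3) by blast
      show ?case
      proof (intro allI impI)
        fix j :: nat assume j: "1 \<le> j \<and> j \<le> Suc (Suc k)"
        show "f 1 \<le> f j"
        proof (cases "j = Suc (Suc k)")
          case True
          then show ?thesis using ih step(4) by force
        next
          case False
          then show ?thesis using ih j by auto
        qed
      qed
    qed
    have f1: "f 1 > 0" using nf(2)[of 1] by (simp add: f_def)
    from lim have "f \<longlonglongrightarrow> 0" by (simp add: f_def[abs_def])
    then have "\<forall>\<^sub>F k in sequentially. f k < f 1" using f1 by (simp add: order_tendstoD(2))
    then obtain M where M: "\<And>k. k \<ge> M \<Longrightarrow> f k < f 1" by (auto simp: eventually_sequentially)
    define N where "N = max M 1"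
    show "\<exists>N\<ge>1. \<forall>k\<ge>N. \<nu> (Suc k) / real (Suc k) powr (1 / p) < \<nu> k / real k powr (1 / p)"
    proof (intro exI[of _ N] conjI allI impI)
      show "N \<ge> 1" by (simp add: N_def)
      fix k assume k: "k \<ge> N"
      show "\<nu> (Suc k) / real (Suc k) powr (1 / p) < \<nu> k / real k powr (1 / p)"
      proof (rule ccontr)
        assume "\<not> ?thesis"
        then have "f k \<le> f (Suc k)" by (simp add: f_def)
        then have "f 1 \<le> f N" using chain[of k] k by (simp add: N_def)
        then show False using M[of N] by (simp add: N_def)
      qed
    qed
  qed
  have P5: "\<exists>C. \<forall>k\<ge>1. \<nu> k - \<nu> (k - 1) \<le> C * eps_p \<nu> p k * real k powr (1 / p - 1)"
  proof (intro exI[of _ 1] allI impI)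
    fix k :: nat assume k: "k \<ge> 1"
    define x where "x = \<nu> (k - 1)"
    define y where "y = \<nu> k"
    define d where "d = y - x"
    have x0: "x \<ge> 0" and y0: "y > 0" and d0: "d \<ge> 0"
      using nf k by (auto simp: x_def y_def d_def)
    have yk: "real k * d \<le> y" using nu_lin[OF assms(1) k] by (simp add: d_def x_def y_def)
    have kp: "real k > 0" using k by simp
    show "\<nu> k - \<nu> (k - 1) \<le> 1 * eps_p \<nu> p k * real k powr (1 / p - 1)"
    proof (cases "d = 0")
      case True
      then show ?thesis using epsnn[of k] by (simp add: d_def x_def y_def)
    next
      case False
      then have dp: "d > 0" using d0 by simp
      have yp: "y powr p = y powr (p - 1) * y" using y0 powr_add[of y "p - 1" 1] by simp
      have xp: "x powr p \<le> y powr (p - 1) * x"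
      proof (cases "x = 0")
        case False
        then have "x powr p = x powr (p - 1) * x" using x0 powr_add[of x "p - 1" 1] by simp
        also have "\<dots> \<le> y powr (p - 1) * x"
          using x0 assms(2) d0 by (intro mult_right_mono powr_mono2) (auto simp: d_def)
        finally show ?thesis .
      qed simp
      have "y powr p - x powr p \<ge> y powr (p - 1) * d" using yp xp by (simp add: d_def algebra_simps)
      moreover have "y powr (p - 1) \<ge> (real k * d) powr (p - 1)"
        using yk dp kp assms(2) by (intro powr_mono2) auto
      ultimately have "y powr p - x powr p \<ge> (real k * d) powr (p - 1) * d"
        by (meson dp less_imp_le mult_right_mono order_trans)
      also have "(real k * d) powr (p - 1) * d = real k powr (p - 1) * d powr p"
        using dp kp powr_add[of d "p - 1" 1] by (simp add: powr_mult)
      finally have ge: "real k powr (p - 1) * d powr p \<le> y powr p - x powr p" .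
      have "eps_p \<nu> p k = (y powr p - x powr p) powr (1/p)" by (simp add: eps_p_def x_def y_def)
      also have "\<dots> \<ge> (real k powr (p - 1) * d powr p) powr (1/p)"
        using ge p0 by (intro powr_mono2) auto
      finally have "eps_p \<nu> p k \<ge> real k powr ((p - 1) / p) * d"
        using dp kp p0 by (simp add: powr_mult powr_powr)
      then have "eps_p \<nu> p k * real k powr (1 / p - 1) \<ge> real k powr ((p - 1) / p) * d * real k powr (1 / p - 1)"
        by (intro mult_right_mono) auto
      also have "real k powr ((p - 1) / p) * d * real k powr (1 / p - 1) = d"
      proof -
        have "(p - 1) / p + (1 / p - 1) = 0" using p0 by (simp add: field_simps)
        then have "real k powr ((p - 1) / p) * real k powr (1 / p - 1) = 1"
          using kp by (simp add: powr_add[symmetric])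
        then show ?thesis by (simp add: algebra_simps)
      qed
      finally show ?thesis by (simp add: d_def x_def y_def)
    qed
  qed
  show ?thesis using P1 P2 P3 P4 P5 by blast
qed

end
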